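(* Let $\mathcal X$ be a nominal set and $N\subseteq\mathbb A$ finite. Let $b\in\mathbb A\setminus N$, and let $X\subseteq\mathcal X$ with $\mathrm{supp}(X)\subseteq N\cup\{b\}$. Then there exists an injective function $$f:\ \mathrm{orbs}_N\Big(\bigcup_{a\in\mathbb A\setminus N}(a\ b)\cdot X\Big)\to\mathrm{orbs}_{N\cup\{b\}}(X).$$
   Context: Fix a countably infinite set $\mathbb A$ of names. $\mathrm{Perm}$ is the group of finite permutations of $\mathbb A$. $(a\ b)$ denotes the transposition swapping $a$ and $b$ and fixing all other names. A nominal set is a set with a $\mathrm{Perm}$-action in which every element has finite support. $\mathrm{supp}$ denotes the least finite supporting set. Permutations act on subsets pointwise, $\pi\cdot X=\{\pi\cdot x\mid x\in X\}$. For finite $N\subseteq\mathbb A$ and $x\in\mathcal X$: - $\mathrm{orb}_N(x)=\{\pi\cdot x\mid\pi\in\mathrm{Perm},\ \pi(a)=a\ \forall a\in N\}$. For $S\subseteq\mathcal X$: - $\mathrm{orbs}_N(S)=\{\mathrm{orb}_N(x)\mid x\in S\}$. *)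

theory Defs
  imports "HOL-Combinatorics.Perm"
begin

text \<open>Atoms: the countably infinite set of names is modelled by the type nat.
  Perm = the group of finite permutations of names, i.e. the type nat perm
  (bijections moving only finitely many names).\<close>

definition perm_action :: "(nat perm \<Rightarrow> 'x \<Rightarrow> 'x) \<Rightarrow> bool" where
  "perm_action act \<longleftrightarrow> (\<forall>x. act 1 x = x) \<and>
     (\<forall>p q x. act (p * q) x = act p (act q x))"

definition supports :: "(nat perm \<Rightarrow> 'x \<Rightarrow> 'x) \<Rightarrow> nat set \<Rightarrow> 'x \<Rightarrow> bool" where
  "supports act S x \<longleftrightarrow> (\<forall>p. (\<forall>a\<in>S. Perm.apply p a = a) \<longrightarrow> act p x = x)"

definition fin_supp :: "(nat perm \<Rightarrow> 'x \<Rightarrow> 'x) \<Rightarrow> 'x \<Rightarrow> bool" where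
  "fin_supp act x \<longleftrightarrow> (\<exists>S. finite S \<and> supports act S x)"

definition nominal :: "(nat perm \<Rightarrow> 'x \<Rightarrow> 'x) \<Rightarrow> bool" where
  "nominal act \<longleftrightarrow> perm_action act \<and> (\<forall>x. fin_supp act x)"

definition supp :: "(nat perm \<Rightarrow> 'x \<Rightarrow> 'x) \<Rightarrow> 'x \<Rightarrow> nat set" where
  "supp act x = (THE S. finite S \<and> supports act S x \<and>
                   (\<forall>T. finite T \<and> supports act T x \<longrightarrow> S \<subseteq> T))"

definition set_act :: "(nat perm \<Rightarrow> 'x \<Rightarrow> 'x) \<Rightarrow> nat perm \<Rightarrow> 'x set \<Rightarrow> 'x set" where
  "set_act act p X = act p ` X"

definition orb :: "(nat perm \<Rightarrow> 'x \<Rightarrow> 'x) \<Rightarrow> nat set \<Rightarrow> 'x \<Rightarrow> 'x set" where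
  "orb act N x = {act p x | p. \<forall>a\<in>N. Perm.apply p a = a}"

definition orbs :: "(nat perm \<Rightarrow> 'x \<Rightarrow> 'x) \<Rightarrow> nat set \<Rightarrow> 'x set \<Rightarrow> 'x set set" where
  "orbs act N S = orb act N ` S"

end

theory Submission
  imports Defs
begin

lemma inv_fix:
  assumes "Perm.apply p a = a"
  shows "Perm.apply (inverse p) a = a"
proof -
  have "Perm.apply (inverse p) a = Perm.apply (inverse p) (Perm.apply p a)" using assms by simp
  also have "\<dots> = Perm.apply (inverse p * p) a" by (simp only: apply_times o_apply)
  also have "\<dots> = a" by simp
  finally show ?thesis .
qed

lemma orbI: "\<forall>a\<in>N. Perm.apply p a = a \<Longrightarrow> act p x \<in> orb act N x"
  unfolding orb_def by blast

lemma orbE: "w \<in> orb act N x \<Longrightarrow> (\<And>p. w = act p x \<Longrightarrow> \<forall>a\<in>N. Perm.apply p a = a \<Longrightarrow> P) \<Longrightarrow> P"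
  unfolding orb_def by blast

lemma orb_eq:
  assumes pa: "perm_action act" and z: "z \<in> orb act N y"
  shows "orb act N z = orb act N y"
proof -
  from z obtain p where zp: "z = act p y" and pN: "\<forall>a\<in>N. Perm.apply p a = a"
    by (rule orbE)
  have m: "act (p * q) x = act p (act q x)" for p q x using pa unfolding perm_action_def by blast
  show ?thesis
  proof
    show "orb act N z \<subseteq> orb act N y"
    proof
      fix w assume "w \<in> orb act N z"
      then obtain q where wq: "w = act q z" and qN: "\<forall>a\<in>N. Perm.apply q a = a" by (rule orbE)
      have W: "w = act (q * p) y" unfolding wq zp m ..
      have F: "\<forall>a\<in>N. Perm.apply (q*p) a = a"
        using pN qN by (simp add: apply_times)
      show "w \<in> orb act N y" unfolding W using F by (rule orbI)
    qed
  next
    show "orb act N y \<subseteq> orb act N z"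
    proof
      fix w assume "w \<in> orb act N y"
      then obtain q where wq: "w = act q y" and qN: "\<forall>a\<in>N. Perm.apply q a = a" by (rule orbE)
      have e1: "act (q * inverse p) z = act (q * inverse p * p) y" unfolding zp m ..
      have e2: "q * inverse p * p = q" by (simp add: mult.assoc)
      have W: "w = act (q * inverse p) z" unfolding e1 e2 wq ..
      have F: "\<forall>a\<in>N. Perm.apply (q * inverse p) a = a"
      proof
        fix a assume "a \<in> N"
        then have "Perm.apply p a = a" "Perm.apply q a = a" using pN qN by auto
        then show "Perm.apply (q * inverse p) a = a" using inv_fix[of p a] by (simp add: apply_times)
      qed
      show "w \<in> orb act N z" unfolding W using F by (rule orbI)
    qed
  qed
qed

lemma orb_self:
  assumes pa: "perm_action act"
  shows "x \<in> orb act N x"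
proof -
  have "act 1 x = x" using pa unfolding perm_action_def by blast
  moreover have "act 1 x \<in> orb act N x" by (rule orbI) simp
  ultimately show ?thesis by simp
qed

theorem mainTheorem6:
  fixes act :: "nat perm \<Rightarrow> 'x \<Rightarrow> 'x"
    and N :: "nat set" and b :: nat and X :: "'x set"
  assumes "nominal act"
    and "finite N"
    and "b \<notin> N"
    and "fin_supp (set_act act) X"
    and "supp (set_act act) X \<subseteq> N \<union> {b}"
  shows "\<exists>f. inj_on f (orbs act N (\<Union>a\<in>- N. set_act act (swap a b) X)) \<and>
             f ` orbs act N (\<Union>a\<in>- N. set_act act (swap a b) X) \<subseteq> orbs act (N \<union> {b}) X"
proof -
  have pa: "perm_action act" using assms(1) unfolding nominal_def by blast
  have m: "act (p * q) x = act p (act q x)" for p q x using pa unfolding perm_action_def by blast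
  have o: "act 1 x = x" for x using pa unfolding perm_action_def by blast
  have ss: "act (swap c b) (act (swap c b) x) = x" for c x by (simp only: m[symmetric] swap_self o)
  define Y where "Y = (\<Union>a\<in>- N. set_act act (swap a b) X)"
  define g where "g Q = (SOME x. x \<in> X \<and> (\<exists>a\<in>-N. act (swap a b) x \<in> Q))" for Q
  define M where "M = N \<union> {b}"
  have gO: "g Q \<in> X \<and> (\<exists>a\<in>-N. act (swap a b) (g Q) \<in> Q \<and> Q = orb act N (act (swap a b) (g Q)))"
    if "Q \<in> orbs act N Y" for Q
  proof -
    from that obtain y where O: "Q = orb act N y" and "y \<in> Y" unfolding orbs_def by blast
    then obtain a x where a: "a \<in> -N" and x: "x \<in> X" and y: "y = act (swap a b) x"
      unfolding Y_def set_act_def by auto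
    have "act (swap a b) x \<in> Q" using O y orb_self[OF pa] by simp
    then have "\<exists>x. x \<in> X \<and> (\<exists>a\<in>-N. act (swap a b) x \<in> Q)"
      using a x by blast
    then have "g Q \<in> X \<and> (\<exists>a\<in>-N. act (swap a b) (g Q) \<in> Q)"
      unfolding g_def by (rule someI_ex)
    then obtain a' where h1: "a' \<in> -N" and h2: "act (swap a' b) (g Q) \<in> Q" and h3: "g Q \<in> X" by blast
    have "orb act N (act (swap a' b) (g Q)) = Q"
      using orb_eq[OF pa, of "act (swap a' b) (g Q)" N y] O h2 by simp
    then have E: "Q = orb act N (act (swap a' b) (g Q))" by (rule sym)
    from h1 h2 h3 E show ?thesis by blast
  qed
  define f where "f Q = orb act M (g Q)" for Q
  have INJ: "inj_on f (orbs act N Y)"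
  proof (rule inj_onI)
    fix Q1 Q2 assume Q1: "Q1 \<in> orbs act N Y" and Q2: "Q2 \<in> orbs act N Y" and e: "f Q1 = f Q2"
    obtain a1 where a1: "a1 \<in> -N" "Q1 = orb act N (act (swap a1 b) (g Q1))" using gO[OF Q1] by blast
    obtain a2 where a2: "a2 \<in> -N" "Q2 = orb act N (act (swap a2 b) (g Q2))" using gO[OF Q2] by blast
    have "g Q2 \<in> orb act M (g Q2)" by (rule orb_self[OF pa])
    then have "g Q2 \<in> orb act M (g Q1)" using e unfolding f_def by simp
    then obtain r where r: "g Q2 = act r (g Q1)" and rM: "\<forall>a\<in>M. Perm.apply r a = a"
      by (rule orbE)
    define q where "q = swap a2 b * r * swap a1 b"
    have "act q (act (swap a1 b) (g Q1)) = act (swap a2 b * r * (swap a1 b * swap a1 b)) (g Q1)"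
      unfolding q_def by (simp add: m mult.assoc ss o)
    also have "\<dots> = act (swap a2 b) (g Q2)" using r by (simp add: m ss)
    finally have eq: "act (swap a2 b) (g Q2) = act q (act (swap a1 b) (g Q1))" by simp
    have "\<forall>a\<in>N. Perm.apply q a = a"
    proof
      fix a assume "a \<in> N"
      then have "a \<noteq> a1" "a \<noteq> a2" "a \<noteq> b" "a \<in> M" using a1 a2 assms(3) M_def by auto
      then show "Perm.apply q a = a" unfolding q_def using rM by (simp add: apply_times)
    qed
    then have "act (swap a2 b) (g Q2) \<in> orb act N (act (swap a1 b) (g Q1))"
      unfolding eq by (rule orbI)
    then have "orb act N (act (swap a2 b) (g Q2)) = orb act N (act (swap a1 b) (g Q1))"
      by (rule orb_eq[OF pa])
    then show "Q1 = Q2" using a1(2) a2(2) by argo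
  qed
  have IM: "f ` orbs act N Y \<subseteq> orbs act M X"
  proof (rule image_subsetI)
    fix Q assume "Q \<in> orbs act N Y"
    then have "g Q \<in> X" using gO by blast
    then show "f Q \<in> orbs act M X" unfolding f_def orbs_def by (rule imageI)
  qed
  show ?thesis
    apply (rule exI[where x=f])
    using INJ IM unfolding Y_def M_def by (rule conjI)
qed

end
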